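(* Let $(U,V)$ be a pair of random variables taking values in finite sets $\mathcal{U}\times\mathcal{V}$ with joint probability mass function $p(u,v)$. Let $\mathcal{U}_1,\dots,\mathcal{U}_{\tilde N_u}$ be a partition of $\mathcal{U}$ into nonempty pairwise disjoint blocks and $\mathcal{V}_1,\dots,\mathcal{V}_{\tilde N_v}$ a partition of $\mathcal{V}$ into nonempty pairwise disjoint blocks (the synonymous mappings), with associated semantic variables $\tilde U,\tilde V$. Then (chain rule of semantic entropy) $$H_s(\tilde U)+H_s(\tilde V\mid U)\le H_s(\tilde U,\tilde V)\le H(U)+H_s(\tilde V\mid U)\le H(U,V).$$
   Context: For $p(\mathcal{U}_{i_s})=\sum_{u\in\mathcal{U}_{i_s}}p(u)$, the semantic entropy is $H_s(\tilde U)=-\sum_{i_s}p(\mathcal{U}_{i_s})\log p(\mathcal{U}_{i_s})$. The semantic joint entropy is $H_s(\tilde U,\tilde V)=-\sum_{i_s=1}^{\tilde N_u}\sum_{j_s=1}^{\tilde N_v}p(\mathcal{U}_{i_s}\times\mathcal{V}_{j_s})\log p(\mathcal{U}_{i_s}\times\mathcal{V}_{j_s})$, with $p(\mathcal{U}_{i_s}\times\mathcal{V}_{j_s})=\sum_{(u,v)\in\mathcal{U}_{i_s}\times\mathcal{V}_{j_s}}p(u,v)$. The semantic conditional entropy is $H_s(\tilde V\mid U)=-\sum_{u\in\mathcal{U}:p(u)>0}\sum_{j_s=1}^{\tilde N_v}p(u)\,p(\mathcal{V}_{j_s}\mid u)\log p(\mathcal{V}_{j_s}\mid u)$, with $p(\mathcal{V}_{j_s}\mid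 u)=\sum_{v\in\mathcal{V}_{j_s}}p(v\mid u)$ (the conditional synonymous mapping uses the same partition of $\mathcal{V}$ for every $u$). $H(U)$, $H(U,V)$ are Shannon entropies; logarithms are to base 2 and $0\log 0=0$. *)

theory Defs
  imports Complex_Main
begin

definition ent :: "real \<Rightarrow> real" where
  "ent x = (if x = 0 then 0 else - x * log 2 x)"

definition is_partition :: "'a set set \<Rightarrow> 'a set \<Rightarrow> bool" where
  "is_partition P S \<longleftrightarrow> (\<Union>P = S) \<and> (\<forall>B\<in>P. B \<noteq> {}) \<and>
     (\<forall>B\<in>P. \<forall>C\<in>P. B \<noteq> C \<longrightarrow> B \<inter> C = {})"

definition margU :: "'u \<Rightarrow> 'v set \<Rightarrow> ('u \<Rightarrow> 'v \<Rightarrow> real) \<Rightarrow> real" where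
  "margU u V p = (\<Sum>v\<in>V. p u v)"

definition H_U :: "'u set \<Rightarrow> 'v set \<Rightarrow> ('u \<Rightarrow> 'v \<Rightarrow> real) \<Rightarrow> real" where
  "H_U U V p = (\<Sum>u\<in>U. ent (margU u V p))"

definition H_UV :: "'u set \<Rightarrow> 'v set \<Rightarrow> ('u \<Rightarrow> 'v \<Rightarrow> real) \<Rightarrow> real" where
  "H_UV U V p = (\<Sum>u\<in>U. \<Sum>v\<in>V. ent (p u v))"

definition Hs_U :: "'u set set \<Rightarrow> 'v set \<Rightarrow> ('u \<Rightarrow> 'v \<Rightarrow> real) \<Rightarrow> real" where
  "Hs_U PU V p = (\<Sum>B\<in>PU. ent (\<Sum>u\<in>B. margU u V p))"

definition Hs_UV :: "'u set set \<Rightarrow> 'v set set \<Rightarrow> ('u \<Rightarrow> 'v \<Rightarrow> real) \<Rightarrow> real" where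
  "Hs_UV PU PV p = (\<Sum>B\<in>PU. \<Sum>C\<in>PV. ent (\<Sum>(u,v)\<in>B \<times> C. p u v))"

definition condp :: "'v set \<Rightarrow> 'u \<Rightarrow> 'v set \<Rightarrow> ('u \<Rightarrow> 'v \<Rightarrow> real) \<Rightarrow> real" where
  "condp C u V p = (\<Sum>v\<in>C. p u v / margU u V p)"

definition Hs_V_given_U :: "'u set \<Rightarrow> 'v set \<Rightarrow> 'v set set \<Rightarrow> ('u \<Rightarrow> 'v \<Rightarrow> real) \<Rightarrow> real" where
  "Hs_V_given_U U V PV p =
     (\<Sum>u\<in>{u\<in>U. margU u V p > 0}. \<Sum>C\<in>PV. margU u V p * ent (condp C u V p))"

end

theory Submission
  imports Defs
begin

lemma ent_eq: "ent x = - x * log 2 x"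
  unfolding ent_def by simp

lemma ent_add: assumes "0 \<le> a" "0 \<le> b" shows "ent (a + b) \<le> ent a + ent b"
proof (cases "a = 0 \<or> b = 0")
  case True then show ?thesis by (auto simp: ent_eq)
next
  case False
  then have a: "a > 0" and b: "b > 0" using assms by auto
  have "log 2 a \<le> log 2 (a+b)" using a b by simp
  moreover have "log 2 b \<le> log 2 (a+b)" using a b by simp
  ultimately have "a * log 2 a + b * log 2 b \<le> a * log 2 (a+b) + b * log 2 (a+b)"
    using a b by (meson add_mono less_imp_le mult_left_mono)
  then show ?thesis by (simp add: ent_eq algebra_simps)
qed

lemma ent_sum: assumes "finite A" "\<And>a. a \<in> A \<Longrightarrow> 0 \<le> f a"
  shows "ent (sum f A) \<le> (\<Sum>a\<in>A. ent (f a))"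
  using assms
proof (induction A rule: finite_induct)
  case empty then show ?case by (simp add: ent_eq)
next
  case (insert x F)
  have "ent (sum f (insert x F)) = ent (f x + sum f F)" using insert by simp
  also have "\<dots> \<le> ent (f x) + ent (sum f F)"
    using insert by (intro ent_add) (auto intro: sum_nonneg)
  also have "\<dots> \<le> ent (f x) + (\<Sum>a\<in>F. ent (f a))" using insert by simp
  finally show ?case using insert by simp
qed

lemma logsum_ln: fixes x y :: "'a \<Rightarrow> real" assumes "finite A" "\<And>a. a \<in> A \<Longrightarrow> 0 \<le> x a" "\<And>a. a \<in> A \<Longrightarrow> x a \<le> y a"
  shows "(\<Sum>a\<in>A. - x a * ln (x a) + x a * ln (y a))
     \<le> - (\<Sum>a\<in>A. x a) * ln (\<Sum>a\<in>A. x a) + (\<Sum>a\<in>A. x a) * ln (\<Sum>a\<in>A. y a)"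
proof -
  define X where "X = (\<Sum>a\<in>A. x a)"
  define Y where "Y = (\<Sum>a\<in>A. y a)"
  have XY: "X \<le> Y" unfolding X_def Y_def using assms(3) by (metis sum_mono)
  show ?thesis
  proof (cases "X = 0")
    case True
    then have "\<forall>a\<in>A. x a = 0" unfolding X_def using assms sum_nonneg_eq_0_iff by blast
    then show ?thesis using True unfolding X_def by simp
  next
    case False
    have X0: "X > 0" using False assms unfolding X_def by (metis less_eq_real_def sum_nonneg)
    have Y0: "Y > 0" using X0 XY by simp
    have trm: "- x a * ln (x a) + x a * ln (y a) \<le> x a * (ln Y - ln X) + y a * X / Y - x a"
      if a: "a \<in> A" for a
    proof (cases "x a = 0")
      case True
      then show ?thesis using assms(3)[OF a] X0 Y0 by simp
    next
      case False
      then have xa: "x a > 0" using assms(2)[OF a] by simp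
      then have ya: "y a > 0" using assms(3)[OF a] by simp
      have t: "y a * X / (x a * Y) > 0" using xa ya X0 Y0 by simp
      have "ln (y a * X / (x a * Y)) \<le> y a * X / (x a * Y) - 1"
        using ln_le_minus_one[OF t] .
      moreover have "ln (y a * X / (x a * Y)) = ln (y a) + ln X - ln (x a) - ln Y"
        using xa ya X0 Y0 by (simp add: ln_div ln_mult)
      ultimately have "ln (y a) + ln X - ln (x a) - ln Y \<le> y a * X / (x a * Y) - 1" by simp
      then have "x a * (ln (y a) + ln X - ln (x a) - ln Y) \<le> x a * (y a * X / (x a * Y) - 1)"
        using xa by (simp add: mult_left_mono)
      also have "\<dots> = y a * X / Y - x a" using xa Y0 by (simp add: field_simps)
      finally show ?thesis by (simp add: algebra_simps)
    qed
    have "(\<Sum>a\<in>A. - x a * ln (x a) + x a * ln (y a))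
       \<le> (\<Sum>a\<in>A. x a * (ln Y - ln X) + y a * X / Y - x a)"
      using trm by (intro sum_mono) auto
    also have "\<dots> = X * (ln Y - ln X) + Y * X / Y - X"
      unfolding X_def Y_def by (simp add: sum.distrib sum_subtractf sum_distrib_right sum_divide_distrib)
    also have "\<dots> = - X * ln X + X * ln Y" using Y0 by (simp add: algebra_simps)
    finally show ?thesis unfolding X_def Y_def .
  qed
qed

lemma logsum: assumes "finite A" "\<And>a. a \<in> A \<Longrightarrow> 0 \<le> x a" "\<And>a. a \<in> A \<Longrightarrow> x a \<le> y a"
  shows "(\<Sum>a\<in>A. ent (x a) + x a * log 2 (y a))
     \<le> ent (\<Sum>a\<in>A. x a) + (\<Sum>a\<in>A. x a) * log 2 (\<Sum>a\<in>A. y a)"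
proof -
  have l2: "ln 2 > (0::real)" by simp
  have "(\<Sum>a\<in>A. ent (x a) + x a * log 2 (y a)) = (\<Sum>a\<in>A. - x a * ln (x a) + x a * ln (y a)) / ln 2"
    by (simp add: ent_eq log_def sum_divide_distrib field_simps)
  also have "\<dots> \<le> (- (\<Sum>a\<in>A. x a) * ln (\<Sum>a\<in>A. x a) + (\<Sum>a\<in>A. x a) * ln (\<Sum>a\<in>A. y a)) / ln 2"
    using logsum_ln[OF assms] l2 by (simp add: divide_right_mono)
  also have "\<dots> = ent (\<Sum>a\<in>A. x a) + (\<Sum>a\<in>A. x a) * log 2 (\<Sum>a\<in>A. y a)"
    by (simp add: ent_eq log_def field_simps)
  finally show ?thesis .
qed

lemma part_sum: assumes "is_partition P S" "finite S"
  shows "(\<Sum>B\<in>P. \<Sum>x\<in>B. f x) = (\<Sum>x\<in>S. f x)"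
proof -
  have U: "\<Union>P = S" and D: "\<forall>B\<in>P. \<forall>C\<in>P. B \<noteq> C \<longrightarrow> B \<inter> C = {}"
    using assms(1) unfolding is_partition_def by auto
  have fP: "finite P" using U assms(2) by (metis finite_UnionD)
  have fB: "\<forall>B\<in>P. finite B" using U assms(2) by (metis Union_upper finite_subset)
  have "(\<Sum>x\<in>\<Union>P. f x) = (\<Sum>B\<in>P. \<Sum>x\<in>B. f x)"
    using sum.Union_disjoint[OF fB D] by simp
  then show ?thesis using U by simp
qed

lemma part_finite: assumes "is_partition P S" "finite S" shows "finite P"
  using assms unfolding is_partition_def by (metis finite_UnionD)

lemma part_sub: assumes "is_partition P S" "B \<in> P" shows "B \<subseteq> S"
  using assms unfolding is_partition_def by auto

lemma mul_ent_div: assumes "m > 0" "q > 0"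
  shows "m * ent (q / m) = ent q + q * log 2 m"
proof -
  have l: "log 2 (q / m) = log 2 q - log 2 m" using assms by (simp add: log_divide)
  have mq: "m * (q / m) = q" using assms by simp
  have "m * ent (q / m) = - (m * (q / m)) * log 2 (q / m)" unfolding ent_eq by (simp only: mult.assoc mult_minus_left mult_minus_right)
  also have "\<dots> = - q * (log 2 q - log 2 m)" by (simp only: mq l)
  also have "\<dots> = ent q + q * log 2 m" unfolding ent_eq by (simp add: algebra_simps)
  finally show ?thesis .
qed

theorem theorem1:
  fixes U :: "'u set" and V :: "'v set" and p :: "'u \<Rightarrow> 'v \<Rightarrow> real"
    and PU :: "'u set set" and PV :: "'v set set"
  assumes "finite U" and "finite V"
    and "\<And>u v. u \<in> U \<Longrightarrow> v \<in> V \<Longrightarrow> p u v \<ge> 0"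
    and "(\<Sum>u\<in>U. \<Sum>v\<in>V. p u v) = 1"
    and "is_partition PU U" and "is_partition PV V"
  shows "Hs_U PU V p + Hs_V_given_U U V PV p \<le> Hs_UV PU PV p
       \<and> Hs_UV PU PV p \<le> H_U U V p + Hs_V_given_U U V PV p
       \<and> H_U U V p + Hs_V_given_U U V PV p \<le> H_UV U V p"
proof -
  note fU = assms(1) and fV = assms(2) and nn = assms(3) and pU = assms(5) and pV = assms(6)
  define m where "m u = margU u V p" for u
  define q where "q u C = (\<Sum>v\<in>C. p u v)" for u C
  have fPU: "finite PU" using part_finite[OF pU fU] .
  have fPV: "finite PV" using part_finite[OF pV fV] .
  have CV: "C \<subseteq> V" if "C \<in> PV" for C using part_sub[OF pV that] .
  have BU: "B \<subseteq> U" if "B \<in> PU" for B using part_sub[OF pU that] .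
  have fC: "finite C" if "C \<in> PV" for C using CV[OF that] fV finite_subset by blast
  have fB: "finite B" if "B \<in> PU" for B using BU[OF that] fU finite_subset by blast
  have m0: "m u \<ge> 0" if "u \<in> U" for u unfolding m_def margU_def using nn that by (simp add: sum_nonneg)
  have sq: "(\<Sum>C\<in>PV. q u C) = m u" for u
    unfolding q_def m_def margU_def using part_sum[OF pV fV] .
  have q0: "q u C \<ge> 0" if "u \<in> U" "C \<in> PV" for u C
    unfolding q_def using nn that CV by (meson subsetD sum_nonneg)
  have qm: "q u C \<le> m u" if "u \<in> U" "C \<in> PV" for u C
    unfolding q_def m_def margU_def using nn that CV fV by (intro sum_mono2) auto
  have key: "(\<Sum>C\<in>PV. ent (q u C) + q u C * log 2 (m u)) = (\<Sum>C\<in>PV. ent (q u C)) - ent (m u)" for u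
  proof -
    have "(\<Sum>C\<in>PV. ent (q u C) + q u C * log 2 (m u)) = (\<Sum>C\<in>PV. ent (q u C)) + m u * log 2 (m u)"
      by (simp add: sum.distrib sum_distrib_right[symmetric] sq)
    then show ?thesis by (simp add: ent_eq)
  qed
  have cond: "Hs_V_given_U U V PV p = (\<Sum>u\<in>U. (\<Sum>C\<in>PV. ent (q u C)) - ent (m u))"
  proof -
    have "Hs_V_given_U U V PV p = (\<Sum>u\<in>{u\<in>U. m u > 0}. (\<Sum>C\<in>PV. ent (q u C)) - ent (m u))"
      unfolding Hs_V_given_U_def m_def[symmetric]
    proof (rule sum.cong[OF refl])
      fix u assume u: "u \<in> {u\<in>U. m u > 0}"
      have "m u * ent (condp C u V p) = ent (q u C) + q u C * log 2 (m u)" if C: "C \<in> PV" for C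
      proof -
        have cd: "condp C u V p = q u C / m u"
          unfolding condp_def q_def m_def by (simp add: sum_divide_distrib)
        show ?thesis
        proof (cases "q u C = 0")
          case True then show ?thesis using cd by (simp add: ent_eq)
        next
          case False
          then have "q u C > 0" using q0 u C by force
          then show ?thesis unfolding cd using u mul_ent_div by simp
        qed
      qed
      then show "(\<Sum>C\<in>PV. m u * ent (condp C u V p)) = (\<Sum>C\<in>PV. ent (q u C)) - ent (m u)"
        using key by simp
    qed
    also have "\<dots> = (\<Sum>u\<in>U. (\<Sum>C\<in>PV. ent (q u C)) - ent (m u))"
    proof (rule sum.mono_neutral_left[OF fU])
      show "\<forall>i\<in>U - {u \<in> U. 0 < m u}. (\<Sum>C\<in>PV. ent (q i C)) - ent (m i) = 0"
      proof
        fix u assume u: "u \<in> U - {u \<in> U. 0 < m u}"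
        then have mu: "m u = 0" using m0 by force
        have uU: "u \<in> U" using u by blast
        have "(\<Sum>v\<in>V. p u v) = 0" using mu unfolding m_def margU_def .
        then have "\<forall>v\<in>V. p u v = 0" using sum_nonneg_eq_0_iff[OF fV] nn[OF uU] by blast
        then have "q u C = 0" if "C \<in> PV" for C unfolding q_def using CV[OF that] by (simp add: subset_iff)
        then show "(\<Sum>C\<in>PV. ent (q u C)) - ent (m u) = 0" using mu by (simp add: ent_eq)
      qed
    qed auto
    finally show ?thesis .
  qed
  have HUc: "H_U U V p + Hs_V_given_U U V PV p = (\<Sum>u\<in>U. \<Sum>C\<in>PV. ent (q u C))"
    unfolding cond H_U_def m_def[symmetric] by (simp add: sum_subtractf)
  have i3: "H_U U V p + Hs_V_given_U U V PV p \<le> H_UV U V p"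
  proof -
    have "(\<Sum>u\<in>U. \<Sum>C\<in>PV. ent (q u C)) \<le> (\<Sum>u\<in>U. \<Sum>C\<in>PV. \<Sum>v\<in>C. ent (p u v))"
      unfolding q_def
      by (intro sum_mono ent_sum) (use fC nn CV in blast)+
    also have "\<dots> = H_UV U V p" unfolding H_UV_def using part_sum[OF pV fV] by (intro sum.cong refl) blast
    finally show ?thesis using HUc by simp
  qed
  have QB: "(\<Sum>(u,v)\<in>B \<times> C. p u v) = (\<Sum>u\<in>B. q u C)" if "B \<in> PU" "C \<in> PV" for B C
    unfolding q_def using sum.cartesian_product[of "\<lambda>u v. p u v" C B] by simp
  have HsUV: "Hs_UV PU PV p = (\<Sum>B\<in>PU. \<Sum>C\<in>PV. ent (\<Sum>u\<in>B. q u C))"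
    unfolding Hs_UV_def using QB by (intro sum.cong refl) auto
  have i2: "Hs_UV PU PV p \<le> H_U U V p + Hs_V_given_U U V PV p"
  proof -
    have "(\<Sum>B\<in>PU. \<Sum>C\<in>PV. ent (\<Sum>u\<in>B. q u C)) \<le> (\<Sum>B\<in>PU. \<Sum>C\<in>PV. \<Sum>u\<in>B. ent (q u C))"
      by (intro sum_mono ent_sum) (use fB q0 BU in blast)+
    also have "\<dots> = (\<Sum>B\<in>PU. \<Sum>u\<in>B. \<Sum>C\<in>PV. ent (q u C))"
      by (intro sum.cong refl sum.swap)
    also have "\<dots> = (\<Sum>u\<in>U. \<Sum>C\<in>PV. ent (q u C))" using part_sum[OF pU fU] by blast
    finally show ?thesis using HsUV HUc by simp
  qed
  have i1: "Hs_U PU V p + Hs_V_given_U U V PV p \<le> Hs_UV PU PV p"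
  proof -
    have perB: "ent (\<Sum>u\<in>B. m u) + (\<Sum>u\<in>B. (\<Sum>C\<in>PV. ent (q u C)) - ent (m u))
        \<le> (\<Sum>C\<in>PV. ent (\<Sum>u\<in>B. q u C))" if B: "B \<in> PU" for B
    proof -
      have "(\<Sum>u\<in>B. (\<Sum>C\<in>PV. ent (q u C)) - ent (m u))
          = (\<Sum>u\<in>B. \<Sum>C\<in>PV. ent (q u C) + q u C * log 2 (m u))" using key by simp
      also have "\<dots> = (\<Sum>C\<in>PV. \<Sum>u\<in>B. ent (q u C) + q u C * log 2 (m u))" by (rule sum.swap)
      also have "\<dots> \<le> (\<Sum>C\<in>PV. ent (\<Sum>u\<in>B. q u C) + (\<Sum>u\<in>B. q u C) * log 2 (\<Sum>u\<in>B. m u))"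
        by (intro sum_mono logsum) (use fB B BU q0 qm in blast)+
      also have "\<dots> = (\<Sum>C\<in>PV. ent (\<Sum>u\<in>B. q u C)) + (\<Sum>C\<in>PV. \<Sum>u\<in>B. q u C) * log 2 (\<Sum>u\<in>B. m u)"
        by (simp add: sum.distrib sum_distrib_right)
      also have "(\<Sum>C\<in>PV. \<Sum>u\<in>B. q u C) = (\<Sum>u\<in>B. m u)"
        by (subst sum.swap) (simp add: sq)
      finally show ?thesis by (simp add: ent_eq)
    qed
    have "Hs_U PU V p + Hs_V_given_U U V PV p
        = (\<Sum>B\<in>PU. ent (\<Sum>u\<in>B. m u) + (\<Sum>u\<in>B. (\<Sum>C\<in>PV. ent (q u C)) - ent (m u)))"
      unfolding Hs_U_def cond m_def[symmetric] part_sum[OF pU fU, symmetric]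
      by (simp add: sum.distrib)
    also have "\<dots> \<le> (\<Sum>B\<in>PU. \<Sum>C\<in>PV. ent (\<Sum>u\<in>B. q u C))"
      using perB by (intro sum_mono) auto
    finally show ?thesis using HsUV by simp
  qed
  show ?thesis using i1 i2 i3 by simp
qed

end
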